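(* Restriction along the inclusion $\mathcal{S}_q\hookrightarrow\mathrm{Sp}(\mathcal{E}_q^{deg})$ induces an equivalence of categories $\mathcal{F}_{iso}\simeq\mathrm{Func}(\mathcal{S}_q,\mathcal{E})$.
   Context: $\mathcal{E}$ is the category of all $\mathbb{F}_2$-vector spaces. $\mathcal{E}_q^{deg}$: objects finite-dimensional quadratic spaces over $\mathbb{F}_2$ (possibly degenerate), morphisms injective linear maps preserving the forms; it has pullbacks. $\mathrm{Sp}(\mathcal{E}_q^{deg})$: same objects; morphisms are spans $[V\leftarrow D\rightarrow W]$ up to isomorphism of $D$, composed by pullback. $\mathcal{F}_{iso}=\mathrm{Func}(\mathrm{Sp}(\mathcal{E}_q^{deg}),\mathcal{E})$. $\mathcal{S}_q$ is the full subcategory of $\mathrm{Sp}(\mathcal{E}_q^{deg})$ whose objects are the non-degenerate quadratic spaces (those whose polar bilinear form $q(x+y)+q(x)+q(y)$ has trivial radical). *)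

theory Defs
  imports "HOL-Algebra.Module" "HOL-Library.Z2"
begin

definition F2 :: "bit ring" where
  "F2 = \<lparr>carrier = UNIV, monoid.mult = (*), one = 1, zero = 0, add = (+)\<rparr>"

text \<open>An object of E is an F2-module (= F2-vector space) whose carrier lies in a fixed type 'v.\<close>

definition f2_linear :: "(bit, 'v) module \<Rightarrow> (bit, 'v) module \<Rightarrow> ('v \<Rightarrow> 'v) \<Rightarrow> bool" where
  "f2_linear M N f \<longleftrightarrow>
     f \<in> carrier M \<rightarrow> carrier N \<and>
     (\<forall>x\<in>carrier M. \<forall>y\<in>carrier M. f (x \<oplus>\<^bsub>M\<^esub> y) = f x \<oplus>\<^bsub>N\<^esub> f y) \<and>
     (\<forall>a. \<forall>x\<in>carrier M. f (a \<odot>\<^bsub>M\<^esub> x) = a \<odot>\<^bsub>N\<^esub> f x)"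

type_synonym vec = "nat \<Rightarrow> bit"

definition vecs :: "nat \<Rightarrow> vec set" where
  "vecs n = {x. \<forall>i\<ge>n. x i = 0}"

definition vadd :: "vec \<Rightarrow> vec \<Rightarrow> vec" where
  "vadd x y = (\<lambda>i. x i + y i)"

definition vzero :: vec where
  "vzero = (\<lambda>_. 0)"

text \<open>A quadratic space is a pair (n, q): the space F2^n (vectors supported in {0..<n})
  together with a function q on it.\<close>

type_synonym qspace = "nat \<times> (vec \<Rightarrow> bit)"

definition car :: "qspace \<Rightarrow> vec set" where
  "car V = vecs (fst V)"

definition form :: "qspace \<Rightarrow> vec \<Rightarrow> bit" where
  "form V = snd V"

definition polar :: "(vec \<Rightarrow> bit) \<Rightarrow> vec \<Rightarrow> vec \<Rightarrow> bit" where
  "polar q x y = q (vadd x y) + q x + q y"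

text \<open>q is a quadratic form over F2: q(0) = 0 (i.e. q(a x) = a^2 q(x) for a in F2) and the
  polar form is bilinear (it is symmetric by construction).\<close>

definition quadratic_space :: "qspace \<Rightarrow> bool" where
  "quadratic_space V \<longleftrightarrow>
     form V vzero = 0 \<and>
     (\<forall>x\<in>car V. \<forall>y\<in>car V. \<forall>z\<in>car V.
        polar (form V) (vadd x y) z = polar (form V) x z + polar (form V) y z)"

definition nondegenerate :: "qspace \<Rightarrow> bool" where
  "nondegenerate V \<longleftrightarrow>
     (\<forall>x\<in>car V. (\<forall>y\<in>car V. polar (form V) x y = 0) \<longrightarrow> x = vzero)"

text \<open>Objects of S_q.\<close>

definition nondeg_space :: "qspace \<Rightarrow> bool" where
  "nondeg_space V \<longleftrightarrow> quadratic_space V \<and> nondegenerate V"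

text \<open>Morphisms of E_q^deg: injective linear maps preserving the forms
  (two such maps are equal iff they agree on car V).\<close>

definition qmor :: "qspace \<Rightarrow> qspace \<Rightarrow> (vec \<Rightarrow> vec) \<Rightarrow> bool" where
  "qmor V W f \<longleftrightarrow>
     (\<forall>x\<in>car V. f x \<in> car W) \<and>
     (\<forall>x\<in>car V. \<forall>y\<in>car V. f (vadd x y) = vadd (f x) (f y)) \<and>
     inj_on f (car V) \<and>
     (\<forall>x\<in>car V. form W (f x) = form V x)"

definition is_pullback ::
  "qspace \<Rightarrow> qspace \<Rightarrow> qspace \<Rightarrow> (vec \<Rightarrow> vec) \<Rightarrow> (vec \<Rightarrow> vec) \<Rightarrow>
   qspace \<Rightarrow> (vec \<Rightarrow> vec) \<Rightarrow> (vec \<Rightarrow> vec) \<Rightarrow> bool" where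
  "is_pullback A B W f g P p p' \<longleftrightarrow>
     quadratic_space P \<and> qmor P A p \<and> qmor P B p' \<and>
     (\<forall>x\<in>car P. f (p x) = g (p' x)) \<and>
     (\<forall>T a b. quadratic_space T \<and> qmor T A a \<and> qmor T B b \<and> (\<forall>x\<in>car T. f (a x) = g (b x)) \<longrightarrow>
        (\<exists>h. qmor T P h \<and> (\<forall>x\<in>car T. p (h x) = a x \<and> p' (h x) = b x) \<and>
             (\<forall>h'. qmor T P h' \<and> (\<forall>x\<in>car T. p (h' x) = a x \<and> p' (h' x) = b x) \<longrightarrow>
                   (\<forall>x\<in>car T. h' x = h x))))"

type_synonym span = "qspace \<times> (vec \<Rightarrow> vec) \<times> (vec \<Rightarrow> vec)"

text \<open>A span [V <- D -> W].\<close>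

definition is_span :: "qspace \<Rightarrow> qspace \<Rightarrow> span \<Rightarrow> bool" where
  "is_span V W s \<longleftrightarrow> (case s of (D, a, b) \<Rightarrow> quadratic_space D \<and> qmor D V a \<and> qmor D W b)"

definition span_iso :: "span \<Rightarrow> span \<Rightarrow> bool" where
  "span_iso s s' \<longleftrightarrow> (case s of (D, a, b) \<Rightarrow> case s' of (D', a', b') \<Rightarrow>
     (\<exists>h. qmor D D' h \<and> bij_betw h (car D) (car D') \<and>
          (\<forall>x\<in>car D. a' (h x) = a x \<and> b' (h x) = b x)))"

text \<open>Obj selects the objects of the full subcategory: quadratic_space for Sp(E_q^deg)
  itself, nondeg_space for S_q.\<close>

definition is_functor ::
  "(qspace \<Rightarrow> bool) \<Rightarrow> (qspace \<Rightarrow> (bit, 'v) module) \<Rightarrow> (qspace \<Rightarrow> qspace \<Rightarrow> span \<Rightarrow> 'v \<Rightarrow> 'v) \<Rightarrow> bool" where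
  "is_functor Obj F Fm \<longleftrightarrow>
     (\<forall>V. Obj V \<longrightarrow> module F2 (F V)) \<and>
     (\<forall>V W s. Obj V \<and> Obj W \<and> is_span V W s \<longrightarrow> f2_linear (F V) (F W) (Fm V W s)) \<and>
     (\<forall>V W s s'. Obj V \<and> Obj W \<and> is_span V W s \<and> is_span V W s' \<and> span_iso s s' \<longrightarrow>
        (\<forall>x\<in>carrier (F V). Fm V W s x = Fm V W s' x)) \<and>
     (\<forall>V. Obj V \<longrightarrow> (\<forall>x\<in>carrier (F V). Fm V V (V, id, id) x = x)) \<and>
     (\<forall>U V W D a b D' c d P p p'.
        Obj U \<and> Obj V \<and> Obj W \<and> is_span U V (D, a, b) \<and> is_span V W (D', c, d) \<and>
        is_pullback D D' V b c P p p' \<longrightarrow>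
        (\<forall>x\<in>carrier (F U). Fm U W (P, a \<circ> p, d \<circ> p') x = Fm V W (D', c, d) (Fm U V (D, a, b) x)))"

definition is_nat ::
  "(qspace \<Rightarrow> bool) \<Rightarrow> (qspace \<Rightarrow> (bit, 'v) module) \<Rightarrow> (qspace \<Rightarrow> qspace \<Rightarrow> span \<Rightarrow> 'v \<Rightarrow> 'v) \<Rightarrow>
   (qspace \<Rightarrow> (bit, 'v) module) \<Rightarrow> (qspace \<Rightarrow> qspace \<Rightarrow> span \<Rightarrow> 'v \<Rightarrow> 'v) \<Rightarrow>
   (qspace \<Rightarrow> 'v \<Rightarrow> 'v) \<Rightarrow> bool" where
  "is_nat Obj F Fm G Gm \<eta> \<longleftrightarrow>
     (\<forall>V. Obj V \<longrightarrow> f2_linear (F V) (G V) (\<eta> V)) \<and>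
     (\<forall>V W s. Obj V \<and> Obj W \<and> is_span V W s \<longrightarrow>
        (\<forall>x\<in>carrier (F V). \<eta> W (Fm V W s x) = Gm V W s (\<eta> V x)))"

definition is_nat_iso ::
  "(qspace \<Rightarrow> bool) \<Rightarrow> (qspace \<Rightarrow> (bit, 'v) module) \<Rightarrow> (qspace \<Rightarrow> qspace \<Rightarrow> span \<Rightarrow> 'v \<Rightarrow> 'v) \<Rightarrow>
   (qspace \<Rightarrow> (bit, 'v) module) \<Rightarrow> (qspace \<Rightarrow> qspace \<Rightarrow> span \<Rightarrow> 'v \<Rightarrow> 'v) \<Rightarrow>
   (qspace \<Rightarrow> 'v \<Rightarrow> 'v) \<Rightarrow> bool" where
  "is_nat_iso Obj F Fm G Gm \<eta> \<longleftrightarrow>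
     is_nat Obj F Fm G Gm \<eta> \<and>
     (\<forall>V. Obj V \<longrightarrow> bij_betw (\<eta> V) (carrier (F V)) (carrier (G V)))"

end

theory Submission
  imports Defs
begin

definition trunc :: "nat \<Rightarrow> vec \<Rightarrow> vec" where
  "trunc n x = (\<lambda>i. if i < n then x i else 0)"

definition hypq :: "qspace \<Rightarrow> vec \<Rightarrow> bit" where
  "hypq V x = form V (trunc (fst V) x) + (\<Sum>i<fst V. x i * x (fst V + i))"

definition hyp :: "qspace \<Rightarrow> qspace" where
  "hyp V = (2 * fst V, hypq V)"

lemma bit_add_self[simp]: "(a::bit) + a = 0"
  by (cases a) simp_all

lemma trunc_car: "trunc n x \<in> vecs n"
  by (simp add: trunc_def vecs_def)

lemma trunc_vadd: "trunc n (vadd x y) = vadd (trunc n x) (trunc n y)"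
  by (auto simp: trunc_def vadd_def)

lemma trunc_vzero: "trunc n vzero = vzero"
  by (auto simp: trunc_def vzero_def)

lemma polar_hypq:
  "polar (hypq V) x y = polar (form V) (trunc (fst V) x) (trunc (fst V) y)
     + (\<Sum>i<fst V. x i * y (fst V + i) + y i * x (fst V + i))"
proof -
  let ?n = "fst V"
  have S: "(\<Sum>i<?n. vadd x y i * vadd x y (?n + i)) =
     (\<Sum>i<?n. x i * x (?n + i)) + (\<Sum>i<?n. y i * y (?n + i)) + (\<Sum>i<?n. x i * y (?n + i) + y i * x (?n + i))"
    by (simp add: vadd_def sum.distrib[symmetric] algebra_simps del: add_bit_eq_xor mult_bit_eq_and)
  show ?thesis
    unfolding polar_def hypq_def trunc_vadd S
    by (simp add: algebra_simps del: add_bit_eq_xor mult_bit_eq_and)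
qed

lemma car_hyp: "car (hyp V) = vecs (2 * fst V)"
  by (simp add: car_def hyp_def)

lemma form_hyp: "form (hyp V) = hypq V"
  by (simp add: form_def hyp_def)

lemma vadd_vzero[simp]: "vadd x vzero = x" "vadd vzero x = x"
  by (simp_all add: vadd_def vzero_def del: add_bit_eq_xor)

lemma polar_zero2: "q vzero = 0 \<Longrightarrow> polar q x vzero = 0"
  by (simp add: polar_def del: add_bit_eq_xor)

lemma polar_zero1: "q vzero = 0 \<Longrightarrow> polar q vzero x = 0"
  by (simp add: polar_def algebra_simps del: add_bit_eq_xor)

lemma quad_hyp: assumes "quadratic_space V" shows "quadratic_space (hyp V)"
proof -
  let ?n = "fst V"
  have z: "form V vzero = 0" using assms by (simp add: quadratic_space_def)
  have bl: "\<And>x y z. x \<in> car V \<Longrightarrow> y \<in> car V \<Longrightarrow> z \<in> car V \<Longrightarrow>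
      polar (form V) (vadd x y) z = polar (form V) x z + polar (form V) y z"
    using assms by (simp add: quadratic_space_def)
  have tc: "\<And>x. trunc ?n x \<in> car V" by (simp add: car_def trunc_car)
  have "hypq V vzero = 0"
    by (simp add: hypq_def trunc_vzero z, simp add: vzero_def)
  moreover have "polar (hypq V) (vadd x y) w = polar (hypq V) x w + polar (hypq V) y w" for x y w
  proof -
    have "(\<Sum>i<?n. vadd x y i * w (?n + i) + w i * vadd x y (?n + i)) =
       (\<Sum>i<?n. x i * w (?n + i) + w i * x (?n + i)) + (\<Sum>i<?n. y i * w (?n + i) + w i * y (?n + i))"
      by (simp add: vadd_def sum.distrib[symmetric] algebra_simps del: add_bit_eq_xor mult_bit_eq_and)
    then show ?thesis unfolding polar_hypq trunc_vadd bl[OF tc tc tc]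
      by (simp add: algebra_simps del: add_bit_eq_xor mult_bit_eq_and)
  qed
  ultimately show ?thesis by (simp add: quadratic_space_def form_hyp)
qed

lemma nondeg_hyp: assumes "quadratic_space V" shows "nondegenerate (hyp V)"
  unfolding nondegenerate_def
proof (intro ballI impI)
  let ?n = "fst V"
  have z: "form V vzero = 0" using assms by (simp add: quadratic_space_def)
  fix x assume xc: "x \<in> car (hyp V)" and P: "\<forall>y\<in>car (hyp V). polar (form (hyp V)) x y = 0"
  define e where "e (k::nat) = (\<lambda>j. if j = k then (1::bit) else 0)" for k
  have ec: "k < 2 * ?n \<Longrightarrow> e k \<in> car (hyp V)" for k by (auto simp: car_hyp vecs_def e_def)
  have low: "x i = 0" if i: "i < ?n" for i
  proof -
    have "polar (hypq V) x (e (?n + i)) = 0" using P ec[of "?n + i"] i by (simp add: form_hyp)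
    moreover have "trunc ?n (e (?n + i)) = vzero" by (auto simp: trunc_def e_def vzero_def)
    moreover have "(\<Sum>j<?n. x j * e (?n + i) (?n + j) + e (?n + i) j * x (?n + j)) = (\<Sum>j<?n. if j = i then x i else 0)"
      by (rule sum.cong) (auto simp: e_def)
    ultimately show ?thesis using i by (simp add: polar_hypq polar_zero2 z del: add_bit_eq_xor mult_bit_eq_and)
  qed
  have tz: "trunc ?n x = vzero" by (auto simp: trunc_def vzero_def low)
  have high: "x (?n + i) = 0" if i: "i < ?n" for i
  proof -
    have "polar (hypq V) x (e i) = 0" using P ec[of "i"] i by (simp add: form_hyp)
    moreover have "(\<Sum>j<?n. x j * e i (?n + j) + e i j * x (?n + j)) = (\<Sum>j<?n. if j = i then x (?n + i) else 0)"
      by (rule sum.cong) (auto simp: e_def low)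
    ultimately show ?thesis using i by (simp add: polar_hypq polar_zero1 z tz del: add_bit_eq_xor mult_bit_eq_and)
  qed
  show "x = vzero"
  proof
    fix k show "x k = vzero k"
    proof (cases "k < ?n")
      case True then show ?thesis by (simp add: low vzero_def)
    next
      case False
      show ?thesis
      proof (cases "k < 2 * ?n")
        case True
        then have "k = ?n + (k - ?n)" "k - ?n < ?n" using False by auto
        then show ?thesis using high[of "k - ?n"] by (simp add: vzero_def)
      next
        case False then show ?thesis using xc by (simp add: car_hyp vecs_def vzero_def)
      qed
    qed
  qed
qed

lemma hyp_sub: "car V \<subseteq> car (hyp V)"
  by (auto simp: car_def hyp_def vecs_def)

lemma hyp_form: "x \<in> car V \<Longrightarrow> form (hyp V) x = form V x"
proof -
  assume x: "x \<in> car V"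
  then have "trunc (fst V) x = x" by (auto simp: trunc_def car_def vecs_def)
  moreover have "(\<Sum>i<fst V. x i * x (fst V + i)) = 0" using x by (simp add: car_def vecs_def)
  ultimately show ?thesis by (simp add: form_hyp hypq_def)
qed

definition HH :: "qspace \<Rightarrow> qspace" where
  "HH V = (if nondeg_space V then V else hyp V)"

lemma HH_nondeg: "quadratic_space V \<Longrightarrow> nondeg_space (HH V)"
  by (simp add: HH_def nondeg_space_def quad_hyp nondeg_hyp)

lemma HH_quad: "quadratic_space V \<Longrightarrow> quadratic_space (HH V)"
  using HH_nondeg nondeg_space_def by blast

lemma HH_id: "nondeg_space V \<Longrightarrow> HH V = V"
  by (simp add: HH_def)

lemma HH_sub: "car V \<subseteq> car (HH V)"
  using hyp_sub by (simp add: HH_def)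

lemma HH_form: "x \<in> car V \<Longrightarrow> form (HH V) x = form V x"
  using hyp_form by (simp add: HH_def)

lemma qmor_id: "qmor V V id"
  by (simp add: qmor_def)

lemma qmor_HH: "qmor D V a \<Longrightarrow> qmor D (HH V) a"
  unfolding qmor_def using HH_sub[of V] HH_form[of _ V] by (simp add: subset_iff)

lemma qmor_id_HH: "qmor V (HH V) id"
  using qmor_HH[OF qmor_id] .

lemma span_HH1: "is_span U V (D, a, b) \<Longrightarrow> is_span (HH U) V (D, a, b)"
  by (simp add: is_span_def qmor_HH)
lemma span_HH2: "is_span U V (D, a, b) \<Longrightarrow> is_span U (HH V) (D, a, b)"
  by (simp add: is_span_def qmor_HH)
lemma span_HH: "is_span U V (D, a, b) \<Longrightarrow> is_span (HH U) (HH V) (D, a, b)"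
  by (simp add: is_span_def qmor_HH)

lemma span_id: "quadratic_space V \<Longrightarrow> is_span V V (V, id, id)"
  by (simp add: is_span_def qmor_id)

lemma span_s: "quadratic_space V \<Longrightarrow> is_span V (HH V) (V, id, id)"
  using span_HH2[OF span_id] .
lemma span_r: "quadratic_space V \<Longrightarrow> is_span (HH V) V (V, id, id)"
  using span_HH1[OF span_id] .

lemma PB_right: "quadratic_space D \<Longrightarrow> qmor D E b \<Longrightarrow> is_pullback D E Z b id D id b"
  unfolding is_pullback_def
proof (intro conjI allI impI)
  fix T a' b' assume "quadratic_space T \<and> qmor T D a' \<and> qmor T E b' \<and> (\<forall>x\<in>car T. b (a' x) = id (b' x))"
  then show "\<exists>h. qmor T D h \<and> (\<forall>x\<in>car T. id (h x) = a' x \<and> b (h x) = b' x) \<and>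
             (\<forall>h'. qmor T D h' \<and> (\<forall>x\<in>car T. id (h' x) = a' x \<and> b (h' x) = b' x) \<longrightarrow>
                   (\<forall>x\<in>car T. h' x = h x))"
    by (intro exI[of _ a']) simp
qed (simp_all add: qmor_id)

lemma PB_left: "quadratic_space D \<Longrightarrow> qmor D E a \<Longrightarrow> is_pullback E D Z id a D a id"
  unfolding is_pullback_def
proof (intro conjI allI impI)
  fix T a' b' assume "quadratic_space T \<and> qmor T E a' \<and> qmor T D b' \<and> (\<forall>x\<in>car T. id (a' x) = a (b' x))"
  then show "\<exists>h. qmor T D h \<and> (\<forall>x\<in>car T. a (h x) = a' x \<and> id (h x) = b' x) \<and>
             (\<forall>h'. qmor T D h' \<and> (\<forall>x\<in>car T. a (h' x) = a' x \<and> id (h' x) = b' x) \<longrightarrow>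
                   (\<forall>x\<in>car T. h' x = h x))"
    by (intro exI[of _ b']) simp
qed (simp_all add: qmor_id)

lemma comp_law:
  assumes "is_functor Obj F Fm" "Obj U" "Obj V" "Obj W" "is_span U V (D, a, b)" "is_span V W (D', c, d)"
    "is_pullback D D' V b c P p p'" "x \<in> carrier (F U)"
  shows "Fm U W (P, a \<circ> p, d \<circ> p') x = Fm V W (D', c, d) (Fm U V (D, a, b) x)"
proof -
  have L: "\<forall>U V W D a b D' c d P p p'.
        Obj U \<and> Obj V \<and> Obj W \<and> is_span U V (D, a, b) \<and> is_span V W (D', c, d) \<and>
        is_pullback D D' V b c P p p' \<longrightarrow>
        (\<forall>x\<in>carrier (F U). Fm U W (P, a \<circ> p, d \<circ> p') x = Fm V W (D', c, d) (Fm U V (D, a, b) x))"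
    using assms(1) unfolding is_functor_def by (elim conjE)
  show ?thesis using L[rule_format, of U V W D a b D' c d P p p' x] assms(2-8) by blast
qed

lemma fD1: "is_functor Obj F Fm \<Longrightarrow> (\<forall>V. Obj V \<longrightarrow> module F2 (F V))"
  unfolding is_functor_def by (elim conjE) assumption
lemma fD2: "is_functor Obj F Fm \<Longrightarrow> (\<forall>V W s. Obj V \<and> Obj W \<and> is_span V W s \<longrightarrow> f2_linear (F V) (F W) (Fm V W s))"
  unfolding is_functor_def by (elim conjE) assumption
lemma fD3: "is_functor Obj F Fm \<Longrightarrow> (\<forall>V W s s'. Obj V \<and> Obj W \<and> is_span V W s \<and> is_span V W s' \<and> span_iso s s' \<longrightarrow>
        (\<forall>x\<in>carrier (F V). Fm V W s x = Fm V W s' x))"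
  unfolding is_functor_def by (elim conjE) assumption
lemma fD4: "is_functor Obj F Fm \<Longrightarrow> (\<forall>V. Obj V \<longrightarrow> (\<forall>x\<in>carrier (F V). Fm V V (V, id, id) x = x))"
  unfolding is_functor_def by (elim conjE) assumption

lemma id_law: "is_functor Obj F Fm \<Longrightarrow> Obj V \<Longrightarrow> x \<in> carrier (F V) \<Longrightarrow> Fm V V (V, id, id) x = x"
  using fD4 by blast

lemma lin_law: "is_functor Obj F Fm \<Longrightarrow> Obj V \<Longrightarrow> Obj W \<Longrightarrow> is_span V W s \<Longrightarrow> f2_linear (F V) (F W) (Fm V W s)"
  using fD2 by blast

lemma lin_mem: "f2_linear M N f \<Longrightarrow> x \<in> carrier M \<Longrightarrow> f x \<in> carrier N"
  unfolding f2_linear_def by blast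

lemma compR:
  assumes "is_functor Obj F Fm" "Obj U" "Obj V" "Obj W" "is_span U V (D, a, b)" "is_span V W (E, id, id)"
    "qmor D E b" "x \<in> carrier (F U)"
  shows "Fm U W (D, a, b) x = Fm V W (E, id, id) (Fm U V (D, a, b) x)"
proof -
  have "quadratic_space D" using assms(5) by (simp add: is_span_def)
  from comp_law[OF assms(1-6) PB_right[OF this assms(7)] assms(8)] show ?thesis by simp
qed

lemma compL:
  assumes "is_functor Obj F Fm" "Obj U" "Obj V" "Obj W" "is_span U V (E, id, id)" "is_span V W (D, a, b)"
    "qmor D E a" "x \<in> carrier (F U)"
  shows "Fm U W (D, a, b) x = Fm V W (D, a, b) (Fm U V (E, id, id) x)"
proof -
  have "quadratic_space D" using assms(6) by (simp add: is_span_def)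
  from comp_law[OF assms(1-6) PB_left[OF this assms(7)] assms(8)] show ?thesis by simp
qed

lemma f2_linear_comp: "f2_linear L M f \<Longrightarrow> f2_linear M N g \<Longrightarrow> f2_linear L N (g \<circ> f)"
  unfolding f2_linear_def by (auto simp: Pi_def)

lemma nat_lin: "is_nat Obj F Fm G Gm \<eta> \<Longrightarrow> Obj V \<Longrightarrow> f2_linear (F V) (G V) (\<eta> V)"
  unfolding is_nat_def by blast

lemma nat_law: "is_nat Obj F Fm G Gm \<eta> \<Longrightarrow> Obj V \<Longrightarrow> Obj W \<Longrightarrow> is_span V W s \<Longrightarrow> x \<in> carrier (F V) \<Longrightarrow>
   \<eta> W (Fm V W s x) = Gm V W s (\<eta> V x)"
  unfolding is_nat_def by blast

lemma nondeg_quad: "nondeg_space V \<Longrightarrow> quadratic_space V"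
  by (simp add: nondeg_space_def)

lemma retract:
  assumes F: "is_functor quadratic_space F Fm" and V: "quadratic_space V" and x: "x \<in> carrier (F V)"
  shows "Fm (HH V) V (V, id, id) (Fm V (HH V) (V, id, id) x) = x"
proof -
  have "Fm V V (V, id, id) x = Fm (HH V) V (V, id, id) (Fm V (HH V) (V, id, id) x)"
    by (rule compR[OF F V HH_quad[OF V] V span_s[OF V] span_r[OF V] qmor_id x])
  then show ?thesis using id_law[OF F V x] by simp
qed

lemma part1:
  assumes F: "is_functor quadratic_space F Fm" and G: "is_functor quadratic_space G Gm"
    and n1: "is_nat quadratic_space F Fm G Gm \<eta>" and n2: "is_nat quadratic_space F Fm G Gm \<eta>'"
    and eq: "\<forall>V. nondeg_space V \<longrightarrow> (\<forall>x\<in>carrier (F V). \<eta> V x = \<eta>' V x)"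
    and V: "quadratic_space V" and x: "x \<in> carrier (F V)"
  shows "\<eta> V x = \<eta>' V x"
proof -
  let ?y = "Fm V (HH V) (V, id, id) x"
  have y: "?y \<in> carrier (F (HH V))" using lin_mem[OF lin_law[OF F V HH_quad[OF V] span_s[OF V]] x] .
  have "\<eta> V x = \<eta> V (Fm (HH V) V (V, id, id) ?y)" using retract[OF F V x] by simp
  also have "\<dots> = Gm (HH V) V (V, id, id) (\<eta> (HH V) ?y)"
    by (rule nat_law[OF n1 HH_quad[OF V] V span_r[OF V] y])
  also have "\<dots> = Gm (HH V) V (V, id, id) (\<eta>' (HH V) ?y)"
    using eq[rule_format, OF HH_nondeg[OF V] y] by simp
  also have "\<dots> = \<eta>' V (Fm (HH V) V (V, id, id) ?y)"
    by (rule nat_law[OF n2 HH_quad[OF V] V span_r[OF V] y, symmetric])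
  also have "\<dots> = \<eta>' V x" using retract[OF F V x] by simp
  finally show ?thesis .
qed

lemma part2:
  assumes F: "is_functor quadratic_space F Fm" and G: "is_functor quadratic_space G Gm"
    and th: "is_nat nondeg_space F Fm G Gm \<theta>"
  shows "\<exists>\<eta>. is_nat quadratic_space F Fm G Gm \<eta> \<and>
               (\<forall>V. nondeg_space V \<longrightarrow> (\<forall>x\<in>carrier (F V). \<eta> V x = \<theta> V x))"
proof -
  define \<eta> where "\<eta> V x = Gm (HH V) V (V, id, id) (\<theta> (HH V) (Fm V (HH V) (V, id, id) x))" for V x
  have lin: "f2_linear (F V) (G V) (\<eta> V)" if V: "quadratic_space V" for V
  proof -
    have "f2_linear (F V) (G V) (Gm (HH V) V (V, id, id) \<circ> (\<theta> (HH V) \<circ> Fm V (HH V) (V, id, id)))"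
      by (rule f2_linear_comp[OF f2_linear_comp[OF lin_law[OF F V HH_quad[OF V] span_s[OF V]] nat_lin[OF th HH_nondeg[OF V]]]
          lin_law[OF G HH_quad[OF V] V span_r[OF V]]])
    then show ?thesis by (simp add: \<eta>_def[abs_def] comp_def)
  qed
  have nat: "\<eta> W (Fm V W (D, a, b) x) = Gm V W (D, a, b) (\<eta> V x)"
    if V: "quadratic_space V" and W: "quadratic_space W" and t: "is_span V W (D, a, b)"
      and x: "x \<in> carrier (F V)" for V W D a b x
  proof -
    have qa: "qmor D V a" and qb: "qmor D W b" using t by (auto simp: is_span_def)
    note HV = HH_quad[OF V] and HW = HH_quad[OF W]
    let ?y = "Fm V (HH V) (V, id, id) x"
    have y: "?y \<in> carrier (F (HH V))" using lin_mem[OF lin_law[OF F V HV span_s[OF V]] x] .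
    have z: "\<theta> (HH V) ?y \<in> carrier (G (HH V))" using lin_mem[OF nat_lin[OF th HH_nondeg[OF V]] y] .
    have "Fm W (HH W) (W, id, id) (Fm V W (D, a, b) x) = Fm V (HH W) (D, a, b) x"
      by (rule compR[OF F V W HW t span_s[OF W] qb x, symmetric])
    also have "\<dots> = Fm (HH V) (HH W) (D, a, b) ?y"
      by (rule compL[OF F V HV HW span_s[OF V] span_HH[OF t] qa x])
    finally have e1: "Fm W (HH W) (W, id, id) (Fm V W (D, a, b) x) = Fm (HH V) (HH W) (D, a, b) ?y" .
    have "\<eta> W (Fm V W (D, a, b) x) = Gm (HH W) W (W, id, id) (\<theta> (HH W) (Fm (HH V) (HH W) (D, a, b) ?y))"
      by (simp add: \<eta>_def e1)
    also have "\<dots> = Gm (HH W) W (W, id, id) (Gm (HH V) (HH W) (D, a, b) (\<theta> (HH V) ?y))"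
      using nat_law[OF th HH_nondeg[OF V] HH_nondeg[OF W] span_HH[OF t] y] by simp
    also have "\<dots> = Gm (HH V) W (D, a, b) (\<theta> (HH V) ?y)"
      by (rule compR[OF G HV HW W span_HH[OF t] span_r[OF W] qb z, symmetric])
    also have "\<dots> = Gm V W (D, a, b) (Gm (HH V) V (V, id, id) (\<theta> (HH V) ?y))"
      by (rule compL[OF G HV V W span_r[OF V] t qa z])
    also have "\<dots> = Gm V W (D, a, b) (\<eta> V x)" by (simp add: \<eta>_def)
    finally show ?thesis .
  qed
  have "is_nat quadratic_space F Fm G Gm \<eta>"
    unfolding is_nat_def
  proof (intro conjI allI impI ballI)
    fix V assume "quadratic_space V" then show "f2_linear (F V) (G V) (\<eta> V)" by (rule lin)
  next
    fix V W s x assume A: "quadratic_space V \<and> quadratic_space W \<and> is_span V W s" and x: "x \<in> carrier (F V)"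
    obtain D a b where "s = (D, a, b)" by (cases s) auto
    then show "\<eta> W (Fm V W s x) = Gm V W s (\<eta> V x)" using nat A x by blast
  qed
  moreover have "\<forall>V. nondeg_space V \<longrightarrow> (\<forall>x\<in>carrier (F V). \<eta> V x = \<theta> V x)"
  proof (intro allI impI ballI)
    fix V x assume V: "nondeg_space V" and x: "x \<in> carrier (F V)"
    have Vq: "quadratic_space V" using V nondeg_quad by blast
    have "\<theta> V x \<in> carrier (G V)" using lin_mem[OF nat_lin[OF th V] x] .
    then show "\<eta> V x = \<theta> V x"
      by (simp add: \<eta>_def HH_id[OF V] id_law[OF F Vq x] id_law[OF G Vq])
  qed
  ultimately show ?thesis by blast
qed

lemma fixed_module:
  assumes M: "module F2 M" and e: "f2_linear M M e"
  shows "module F2 (M\<lparr>carrier := {x \<in> carrier M. e x = x}\<rparr>)"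
proof -
  interpret module F2 M by (rule M)
  have emem: "\<And>x. x \<in> carrier M \<Longrightarrow> e x \<in> carrier M" using e by (simp add: f2_linear_def Pi_def)
  have eadd: "\<And>x y. x \<in> carrier M \<Longrightarrow> y \<in> carrier M \<Longrightarrow> e (x \<oplus>\<^bsub>M\<^esub> y) = e x \<oplus>\<^bsub>M\<^esub> e y"
    using e by (simp add: f2_linear_def)
  have esm: "\<And>c x. x \<in> carrier M \<Longrightarrow> e (c \<odot>\<^bsub>M\<^esub> x) = c \<odot>\<^bsub>M\<^esub> e x"
    using e by (simp add: f2_linear_def)
  have "submodule {x \<in> carrier M. e x = x} F2 M"
  proof (rule submoduleI)
    have "e \<zero>\<^bsub>M\<^esub> = e (\<zero>\<^bsub>F2\<^esub> \<odot>\<^bsub>M\<^esub> \<zero>\<^bsub>M\<^esub>)" by simp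
    also have "\<dots> = \<zero>\<^bsub>F2\<^esub> \<odot>\<^bsub>M\<^esub> e \<zero>\<^bsub>M\<^esub>" by (rule esm) simp
    also have "\<dots> = \<zero>\<^bsub>M\<^esub>" using emem[of "\<zero>\<^bsub>M\<^esub>"] by simp
    finally show "\<zero>\<^bsub>M\<^esub> \<in> {x \<in> carrier M. e x = x}" by simp
  next
    fix a assume a: "a \<in> {x \<in> carrier M. e x = x}"
    then have ac: "a \<in> carrier M" and ea: "e a = a" by auto
    have m: "\<ominus>\<^bsub>M\<^esub> a = (\<ominus>\<^bsub>F2\<^esub> \<one>\<^bsub>F2\<^esub>) \<odot>\<^bsub>M\<^esub> a"
      using smult_l_minus[of "\<one>\<^bsub>F2\<^esub>" a] ac by simp
    have "e (\<ominus>\<^bsub>M\<^esub> a) = (\<ominus>\<^bsub>F2\<^esub> \<one>\<^bsub>F2\<^esub>) \<odot>\<^bsub>M\<^esub> e a" unfolding m by (rule esm[OF ac])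
    then show "\<ominus>\<^bsub>M\<^esub> a \<in> {x \<in> carrier M. e x = x}" using ea m ac by simp
  next
    fix a b assume "a \<in> {x \<in> carrier M. e x = x}" "b \<in> {x \<in> carrier M. e x = x}"
    then show "a \<oplus>\<^bsub>M\<^esub> b \<in> {x \<in> carrier M. e x = x}" using eadd by auto
  next
    fix c x assume "c \<in> carrier F2" "x \<in> {x \<in> carrier M. e x = x}"
    then show "c \<odot>\<^bsub>M\<^esub> x \<in> {x \<in> carrier M. e x = x}" using esm by auto
  qed auto
  then show ?thesis using submodule.submodule_is_module M by blast
qed

lemma pb_base: "is_pullback A B W f g P p p' = is_pullback A B W' f g P p p'"
  by (simp add: is_pullback_def)

lemma f2_linear_id: "f2_linear M M id"
  by (simp add: f2_linear_def)

lemma part3: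
  assumes G: "is_functor nondeg_space G Gm"
  shows "\<exists>F Fm \<theta>. is_functor quadratic_space F Fm \<and> is_nat_iso nondeg_space F Fm G Gm \<theta>"
proof -
  define FF where "FF V = (G (HH V))\<lparr>carrier := {x \<in> carrier (G (HH V)). Gm (HH V) (HH V) (V, id, id) x = x}\<rparr>" for V
  define FFm where "FFm V W s = Gm (HH V) (HH W) s" for V W s
  have cFF: "x \<in> carrier (FF V) \<longleftrightarrow> x \<in> carrier (G (HH V)) \<and> Gm (HH V) (HH V) (V, id, id) x = x" for V x
    by (simp add: FF_def)
  have spe: "quadratic_space V \<Longrightarrow> is_span (HH V) (HH V) (V, id, id)" for V
    using span_HH[OF span_id] .
  have F1: "module F2 (FF V)" if V: "quadratic_space V" for V
    unfolding FF_def
    by (rule fixed_module[OF fD1[OF G, rule_format, OF HH_nondeg[OF V]]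
          lin_law[OF G HH_nondeg[OF V] HH_nondeg[OF V] spe[OF V]]])
  have F2: "f2_linear (FF V) (FF W) (FFm V W s)"
    if V: "quadratic_space V" and W: "quadratic_space W" and t: "is_span V W s" for V W s
  proof -
    obtain D a b where s: "s = (D, a, b)" by (cases s) auto
    have qb: "qmor D W b" using t s by (simp add: is_span_def)
    have L: "f2_linear (G (HH V)) (G (HH W)) (Gm (HH V) (HH W) (D, a, b))"
      using lin_law[OF G HH_nondeg[OF V] HH_nondeg[OF W] span_HH[OF t[unfolded s]]] .
    have mem: "Gm (HH W) (HH W) (W, id, id) (Gm (HH V) (HH W) (D, a, b) x) = Gm (HH V) (HH W) (D, a, b) x"
      if x: "x \<in> carrier (G (HH V))" for x
      by (rule compR[OF G HH_nondeg[OF V] HH_nondeg[OF W] HH_nondeg[OF W] span_HH[OF t[unfolded s]] spe[OF W] qb x, symmetric])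
    show ?thesis using L mem unfolding f2_linear_def FFm_def s
      by (auto simp: FF_def Pi_def)
  qed
  have F3: "\<forall>x\<in>carrier (FF V). FFm V W s x = FFm V W s' x"
    if V: "quadratic_space V" and W: "quadratic_space W" and t: "is_span V W s" and t': "is_span V W s'"
      and i: "span_iso s s'" for V W s s'
  proof -
    obtain D a b where s: "s = (D, a, b)" by (cases s) auto
    obtain D' a' b' where s': "s' = (D', a', b')" by (cases s') auto
    have "\<forall>x\<in>carrier (G (HH V)). Gm (HH V) (HH W) s x = Gm (HH V) (HH W) s' x"
      using fD3[OF G, rule_format, of "HH V" "HH W" s s'] HH_nondeg[OF V] HH_nondeg[OF W]
        span_HH[OF t[unfolded s]] span_HH[OF t'[unfolded s']] i s s' by blast
    then show ?thesis by (simp add: cFF FFm_def)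
  qed
  have F4: "FFm V V (V, id, id) x = x" if "x \<in> carrier (FF V)" for V x
    using that by (simp add: cFF FFm_def)
  have F5: "FFm U W (P, a \<circ> p, d \<circ> p') x = FFm V W (D', c, d) (FFm U V (D, a, b) x)"
    if U: "quadratic_space U" and V: "quadratic_space V" and W: "quadratic_space W"
      and t: "is_span U V (D, a, b)" and t': "is_span V W (D', c, d)"
      and pb: "is_pullback D D' V b c P p p'" and x: "x \<in> carrier (FF U)"
    for U V W D a b D' c d P p p' x
  proof -
    have pb': "is_pullback D D' (HH V) b c P p p'" using pb pb_base by blast
    have xc: "x \<in> carrier (G (HH U))" using x cFF by blast
    show ?thesis unfolding FFm_def
      by (rule comp_law[OF G HH_nondeg[OF U] HH_nondeg[OF V] HH_nondeg[OF W] span_HH[OF t] span_HH[OF t'] pb' xc])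
  qed
  have isF: "is_functor quadratic_space FF FFm"
    unfolding is_functor_def
    apply (intro conjI allI impI ballI)
        apply (simp add: F1)
       apply (elim conjE, rule F2, assumption+)
      apply (elim conjE, rule F3[rule_format], assumption+)
     apply (rule F4, assumption)
    apply (elim conjE, rule F5, assumption+)
    done
  have FFV: "FF V = G V" if V: "nondeg_space V" for V
  proof -
    have Vq: "quadratic_space V" using V nondeg_quad by blast
    have "{x \<in> carrier (G V). Gm V V (V, id, id) x = x} = carrier (G V)"
      using id_law[OF G V] by blast
    then show ?thesis by (simp add: FF_def HH_id[OF V])
  qed
  have "is_nat_iso nondeg_space FF FFm G Gm (\<lambda>V x. x)"
    unfolding is_nat_iso_def is_nat_def
  proof (intro conjI allI impI ballI)
    fix V assume V: "nondeg_space V"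
    show "f2_linear (FF V) (G V) (\<lambda>x. x)" using f2_linear_id[of "G V"] FFV[OF V] by (simp add: id_def)
    show "bij_betw (\<lambda>x. x) (carrier (FF V)) (carrier (G V))" using FFV[OF V] by (simp add: bij_betw_def)
  next
    fix V W s x assume "nondeg_space V \<and> nondeg_space W \<and> is_span V W s"
    then show "FFm V W s x = Gm V W s x" by (simp add: FFm_def HH_id)
  qed
  then show ?thesis using isF by blast
qed

theorem theorem4p13:
  fixes dummy :: "'v itself"
  shows
  "(\<forall>(F :: qspace \<Rightarrow> (bit, 'v) module) Fm G Gm.
      is_functor quadratic_space F Fm \<and> is_functor quadratic_space G Gm \<longrightarrow>
      (\<forall>\<eta> \<eta>'. is_nat quadratic_space F Fm G Gm \<eta> \<and> is_nat quadratic_space F Fm G Gm \<eta>' \<and>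
          (\<forall>V. nondeg_space V \<longrightarrow> (\<forall>x\<in>carrier (F V). \<eta> V x = \<eta>' V x)) \<longrightarrow>
          (\<forall>V. quadratic_space V \<longrightarrow> (\<forall>x\<in>carrier (F V). \<eta> V x = \<eta>' V x))) \<and>
      (\<forall>\<theta>. is_nat nondeg_space F Fm G Gm \<theta> \<longrightarrow>
          (\<exists>\<eta>. is_nat quadratic_space F Fm G Gm \<eta> \<and>
               (\<forall>V. nondeg_space V \<longrightarrow> (\<forall>x\<in>carrier (F V). \<eta> V x = \<theta> V x))))) \<and>
   (\<forall>(G :: qspace \<Rightarrow> (bit, 'v) module) Gm. is_functor nondeg_space G Gm \<longrightarrow>
      (\<exists>F Fm \<theta>. is_functor quadratic_space F Fm \<and> is_nat_iso nondeg_space F Fm G Gm \<theta>))"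
proof (intro conjI allI impI)
  fix F G :: "qspace \<Rightarrow> (bit, 'v) module" and Fm Gm
  assume FG: "is_functor quadratic_space F Fm \<and> is_functor quadratic_space G Gm"
  {
    fix \<eta> \<eta>' V x
    assume A: "is_nat quadratic_space F Fm G Gm \<eta> \<and> is_nat quadratic_space F Fm G Gm \<eta>' \<and>
          (\<forall>V. nondeg_space V \<longrightarrow> (\<forall>x\<in>carrier (F V). \<eta> V x = \<eta>' V x))"
      and V: "quadratic_space V"
    show "\<forall>x\<in>carrier (F V). \<eta> V x = \<eta>' V x"
      using part1[of F Fm G Gm \<eta> \<eta>' V] FG A V by blast
  }
  {
    fix \<theta> assume "is_nat nondeg_space F Fm G Gm \<theta>"
    then show "\<exists>\<eta>. is_nat quadratic_space F Fm G Gm \<eta> \<and>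
               (\<forall>V. nondeg_space V \<longrightarrow> (\<forall>x\<in>carrier (F V). \<eta> V x = \<theta> V x))"
      using part2 FG by blast
  }
next
  fix G :: "qspace \<Rightarrow> (bit, 'v) module" and Gm
  assume "is_functor nondeg_space G Gm"
  then show "\<exists>F Fm \<theta>. is_functor quadratic_space F Fm \<and> is_nat_iso nondeg_space F Fm G Gm \<theta>"
    by (rule part3)
qed

end
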